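(* Consider the following TDCD process. Let $N\ge 1$ silos each contain $K\ge 1$ clients, let $D=D_1+\dots+D_N$, and write every $\theta\in\mathbb{R}^D$ in blocks $\theta=[\theta_{(1)}^T,\dots,\theta_{(N)}^T]^T$ with $\theta_{(j)}\in\mathbb{R}^{D_j}$. Fix an integer $Q\ge1$ and $\eta>0$. Client $k$ of silo $j$ holds $\theta^t_{k,j}\in\mathbb{R}^{D_j}$. Define $\tilde\theta^t\in\mathbb{R}^D$ by $\tilde\theta^t_{(j)}=\frac1K\sum_k\theta^t_{k,j}$. At every multiple $t$ of $Q$, each $\theta^t_{k,j}$ is reset to $\tilde\theta^t_{(j)}$. For the current iteration $t$, let $t_0$ be the most recent such synchronization iteration before $t$ (with $t-t_0\le Q$). Define $y^t_{k,j}\in\mathbb{R}^D$ by $(y^t_{k,j})_{(j)}=\theta^t_{k,j}$ and $(y^t_{k,j})_{(l)}=\tilde\theta^{t_0}_{(l)}$ for $l\ne j$. The update is $\theta^{t+1}_{k,j}=\theta^t_{k,j}-\eta\, g_{k,j}(y^t_{k,j})$, where $g_{k,j}(\cdot)\in\mathbb{R}^{D_j}$ is the stochastic partial gradient computed by client $k$ of silo $j$ on the current minibatch. Then for any constant $L_{\max}>0$, $$\frac{L_{\max}^2}{K}\sum_{j=1}^N\sum_{k=1}^K\|\tilde\theta^t-y^t_{k,j}\|^2\le\frac{\eta^2L_{\max}^2QN}{K}\sum_{j=1}^N\sum_{\tau=t_0}^{t-1}\sum_{p=1}^K\|g_{p,j}(y^\tau_{p,j})\|^2.$$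
   Context: In the paper, $L_{\max}=\max_j L_j$, where $L_j$ is the Lipschitz constant of the block partial gradient $\nabla_{(j)}\mathcal{L}$ of the loss. The inequality does not depend on that interpretation, since both sides carry the factor $L_{\max}^2$. *)

theory Defs
  imports Complex_Main
begin

text \<open>A vector of R^{D_j} (block j) is a function nat => real, of which
  only the coordinates i < D j are meaningful. A vector of R^D, D = D_1 + ... + D_N,
  is given blockwise as a function nat => nat => real: x j is its block j (j = 1..N).
  Client states: th t k j is theta^t_{k,j} (silo j, client k, iteration t).\<close>

definition bnorm :: "nat \<Rightarrow> (nat \<Rightarrow> real) \<Rightarrow> real" where
  "bnorm d v = sqrt (\<Sum>i<d. (v i)^2)"

definition vnorm :: "(nat \<Rightarrow> nat) \<Rightarrow> nat \<Rightarrow> (nat \<Rightarrow> nat \<Rightarrow> real) \<Rightarrow> real" where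
  "vnorm D N x = sqrt (\<Sum>j=1..N. \<Sum>i<D j. (x j i)^2)"

definition avg :: "nat \<Rightarrow> (nat \<Rightarrow> nat \<Rightarrow> nat \<Rightarrow> real) \<Rightarrow> nat \<Rightarrow> nat \<Rightarrow> real" where
  "avg K th j = (\<lambda>i. (1 / real K) * (\<Sum>k=1..K. th k j i))"

definition sync :: "nat \<Rightarrow> nat \<Rightarrow> nat" where
  "sync Q t = Q * (t div Q)"

definition yv :: "nat \<Rightarrow> nat \<Rightarrow> (nat \<Rightarrow> nat \<Rightarrow> nat \<Rightarrow> nat \<Rightarrow> real) \<Rightarrow> nat \<Rightarrow> nat \<Rightarrow> nat
    \<Rightarrow> nat \<Rightarrow> nat \<Rightarrow> real" where
  "yv Q K th t k j = (\<lambda>l. if l = j then th t k j else avg K (th (sync Q t)) l)"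

end

theory Submission
  imports Defs
begin

lemma cs_card:
  fixes f :: "'a \<Rightarrow> real"
  assumes "finite S"
  shows "(\<Sum>x\<in>S. f x)^2 \<le> real (card S) * (\<Sum>x\<in>S. (f x)^2)"
proof -
  have "0 \<le> (\<Sum>a\<in>S. \<Sum>b\<in>S. (f a - f b)^2)" by (intro sum_nonneg) auto
  also have "\<dots> = (\<Sum>a\<in>S. \<Sum>b\<in>S. (f a)^2 + (f b)^2 - 2 * (f a * f b))"
    by (simp add: power2_diff mult.assoc)
  also have "\<dots> = 2 * (real (card S) * (\<Sum>x\<in>S. (f x)^2)) - 2 * (\<Sum>x\<in>S. f x)^2"
    by (simp add: sum_subtractf sum.distrib sum_distrib_left sum_distrib_right power2_eq_square algebra_simps)
  finally show ?thesis by simp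
qed

lemma scalar_bound:
  fixes x :: "nat \<Rightarrow> real" and e :: real
  assumes K: "K \<ge> 1" and l: "l \<in> {1..N}"
  defines "m \<equiv> (1 / real K) * (\<Sum>k=1..K. x k)"
  shows "(\<Sum>j=1..N. \<Sum>k=1..K. (if l = j then e * (x k - m) else - e * m)^2)
         \<le> e^2 * real N * (\<Sum>k=1..K. (x k)^2)"
proof -
  let ?S = "\<Sum>k=1..K. (x k)^2"
  have Km: "real K * m = (\<Sum>k=1..K. x k)" using K by (simp add: m_def)
  have cs: "(\<Sum>k=1..K. x k)^2 \<le> real K * ?S" using cs_card[of "{1..K}" x] by simp
  have Km2: "real K * m^2 \<le> ?S"
  proof -
    have "real K * (real K * m^2) = (\<Sum>k=1..K. x k)^2" using Km by (simp add: power2_eq_square algebra_simps)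
    then have "real K * (real K * m^2) \<le> real K * ?S" using cs by simp
    then show ?thesis using K by simp
  qed
  have var: "(\<Sum>k=1..K. (x k - m)^2) = ?S - real K * m^2"
  proof -
    have "(\<Sum>k=1..K. (x k - m)^2) = (\<Sum>k=1..K. (x k)^2 - 2 * m * x k + m^2)"
      by (simp add: power2_diff algebra_simps)
    also have "\<dots> = ?S - 2 * m * (\<Sum>k=1..K. x k) + real K * m^2"
      by (simp add: sum.distrib sum_subtractf sum_distrib_left)
    finally show ?thesis using Km by (simp add: power2_eq_square algebra_simps)
  qed
  have split: "(\<Sum>j=1..N. \<Sum>k=1..K. (if l = j then e * (x k - m) else - e * m)^2)
     = (\<Sum>j\<in>{1..N}-{l}. \<Sum>k=1..K. (e * m)^2) + (\<Sum>k=1..K. (e * (x k - m))^2)"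
    using l by (subst sum.remove[of _ l]) auto
  also have "\<dots> = real (N - 1) * (real K * e^2 * m^2) + e^2 * (\<Sum>k=1..K. (x k - m)^2)"
    using l by (simp add: power_mult_distrib sum_distrib_left)
  also have "\<dots> \<le> real (N - 1) * (e^2 * ?S) + e^2 * ?S"
  proof (intro add_mono mult_left_mono)
    show "real K * e\<^sup>2 * m\<^sup>2 \<le> e\<^sup>2 * ?S" using Km2 mult_left_mono[OF Km2, of "e^2"] by (simp add: algebra_simps)
    have "0 \<le> real K * m^2" by simp
    then show "(\<Sum>k=1..K. (x k - m)^2) \<le> ?S" using var by linarith
  qed auto
  also have "\<dots> = e^2 * real N * ?S" using l by (simp add: of_nat_diff algebra_simps)
  finally show ?thesis .
qed
theorem lemma6:
  fixes N K Q t :: nat and D :: "nat \<Rightarrow> nat" and \<eta> Lmax :: real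
    and th :: "nat \<Rightarrow> nat \<Rightarrow> nat \<Rightarrow> nat \<Rightarrow> real"
    and g :: "nat \<Rightarrow> nat \<Rightarrow> nat \<Rightarrow> (nat \<Rightarrow> nat \<Rightarrow> real) \<Rightarrow> nat \<Rightarrow> real"
  assumes "N \<ge> 1" and "K \<ge> 1" and "Q \<ge> 1" and "\<eta> > 0" and "Lmax > 0"
    and init: "\<forall>k\<in>{1..K}. \<forall>j\<in>{1..N}. th 0 k j = avg K (th 0) j"
    and step: "\<forall>\<tau> k j. k \<in> {1..K} \<longrightarrow> j \<in> {1..N} \<longrightarrow>
       th (Suc \<tau>) k j =
         (if Q dvd Suc \<tau>
          then avg K (\<lambda>p l i. th \<tau> p l i - \<eta> * g \<tau> p l (yv Q K th \<tau> p l) i) j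
          else (\<lambda>i. th \<tau> k j i - \<eta> * g \<tau> k j (yv Q K th \<tau> k j) i))"
  shows "Lmax^2 / real K *
           (\<Sum>j=1..N. \<Sum>k=1..K.
              (vnorm D N (\<lambda>l i. avg K (th t) l i - yv Q K th t k j l i))^2)
         \<le> \<eta>^2 * Lmax^2 * real Q * real N / real K *
           (\<Sum>j=1..N. \<Sum>\<tau>\<in>{sync Q t..<t}. \<Sum>p=1..K.
              (bnorm (D j) (g \<tau> p j (yv Q K th \<tau> p j)))^2)"
proof -
  define t0 where "t0 = sync Q t"
  have t0le: "t0 \<le> t" unfolding t0_def sync_def by (metis div_mult_mod_eq le_add1 mult.commute)
  have t0lt: "t < t0 + Q"
  proof -
    have "t = Q * (t div Q) + t mod Q" by simp
    moreover have "t mod Q < Q" using assms(3) by simp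
    ultimately show ?thesis unfolding t0_def sync_def by linarith
  qed
  have dvd0: "Q dvd t0" unfolding t0_def sync_def by simp
  define a where "a = avg K (th t0)"
  have A: "th t0 k j = a j" if k: "k \<in> {1..K}" and j: "j \<in> {1..N}" for k j
  proof (cases t0)
    case 0 then show ?thesis using init k j by (simp add: a_def)
  next
    case (Suc s)
    define F where "F = (\<lambda>p l i. th s p l i - \<eta> * g s p l (yv Q K th s p l) i)"
    have e: "th t0 k' j = avg K F j" if "k' \<in> {1..K}" for k'
      using step that j dvd0 Suc by (simp add: F_def)
    have "a j = (\<lambda>i. 1 / real K * (\<Sum>k'=1..K. avg K F j i))"
      unfolding a_def avg_def[of K "th t0"] using e by (intro ext) simp
    also have "\<dots> = avg K F j" using assms(2) by (intro ext) simp
    finally show ?thesis using e k by simp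
  qed
  define G where "G = (\<lambda>k l i. \<Sum>\<tau>\<in>{t0..<t}. g \<tau> k l (yv Q K th \<tau> k l) i)"
  have B: "t0 + n \<le> t \<Longrightarrow> th (t0 + n) k j = (\<lambda>i. a j i - \<eta> * (\<Sum>\<tau>\<in>{t0..<t0+n}. g \<tau> k j (yv Q K th \<tau> k j) i))"
    if k: "k \<in> {1..K}" and j: "j \<in> {1..N}" for n k j
  proof (induction n)
    case 0 then show ?case using A k j by simp
  next
    case (Suc n)
    have nd: "\<not> Q dvd Suc (t0 + n)"
    proof
      assume "Q dvd Suc (t0 + n)"
      then have "Q dvd Suc n" using dvd0 by (metis add_Suc_right dvd_add_right_iff)
      moreover have "Suc n < Q" using Suc.prems t0lt by simp
      ultimately show False by (simp add: nat_dvd_not_less)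
    qed
    show ?case using Suc step k j nd by (auto simp: algebra_simps)
  qed
  have th_t: "th t k l i = a l i - \<eta> * G k l i" if "k \<in> {1..K}" "l \<in> {1..N}" for k l i
    using B[of k l "t - t0"] that t0le by (simp add: G_def)
  define Gb where "Gb = (\<lambda>l i. 1 / real K * (\<Sum>k=1..K. G k l i))"
  have avg_t: "avg K (th t) l i = a l i - \<eta> * Gb l i" if "l \<in> {1..N}" for l i
  proof -
    have "avg K (th t) l i = 1 / real K * (\<Sum>k=1..K. a l i - \<eta> * G k l i)"
      using th_t that by (simp add: avg_def)
    also have "\<dots> = a l i - \<eta> * Gb l i" using assms(2)
      by (simp add: Gb_def sum_subtractf sum_distrib_left[symmetric] field_simps)
    finally show ?thesis .
  qed
  define dd where "dd = (\<lambda>j k l i. (if l = j then \<eta> * (G k l i - Gb l i) else - \<eta> * Gb l i))"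
  have diff: "avg K (th t) l i - yv Q K th t k j l i = dd j k l i"
    if "k \<in> {1..K}" "j \<in> {1..N}" "l \<in> {1..N}" for j k l i
    using that avg_t th_t by (auto simp: yv_def dd_def a_def t0_def algebra_simps)
  have vn: "(vnorm D N (\<lambda>l i. avg K (th t) l i - yv Q K th t k j l i))^2
      = (\<Sum>l=1..N. \<Sum>i<D l. (dd j k l i)^2)" if "k \<in> {1..K}" "j \<in> {1..N}" for j k
    unfolding vnorm_def using that diff by (simp add: sum_nonneg)
  have "(\<Sum>j=1..N. \<Sum>k=1..K. (vnorm D N (\<lambda>l i. avg K (th t) l i - yv Q K th t k j l i))^2)
      = (\<Sum>j=1..N. \<Sum>k=1..K. \<Sum>l=1..N. \<Sum>i<D l. (dd j k l i)^2)"
    using vn by simp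
  also have "\<dots> = (\<Sum>j=1..N. \<Sum>l=1..N. \<Sum>k=1..K. \<Sum>i<D l. (dd j k l i)^2)"
    by (rule sum.cong[OF refl], rule sum.swap)
  also have "\<dots> = (\<Sum>l=1..N. \<Sum>j=1..N. \<Sum>k=1..K. \<Sum>i<D l. (dd j k l i)^2)"
    by (rule sum.swap)
  also have "\<dots> = (\<Sum>l=1..N. \<Sum>i<D l. \<Sum>j=1..N. \<Sum>k=1..K. (dd j k l i)^2)"
  proof (rule sum.cong[OF refl])
    fix l
    have "(\<Sum>j=1..N. \<Sum>k=1..K. \<Sum>i<D l. (dd j k l i)^2) = (\<Sum>j=1..N. \<Sum>i<D l. \<Sum>k=1..K. (dd j k l i)^2)"
      by (rule sum.cong[OF refl], rule sum.swap)
    also have "\<dots> = (\<Sum>i<D l. \<Sum>j=1..N. \<Sum>k=1..K. (dd j k l i)^2)"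
      by (rule sum.swap)
    finally show "(\<Sum>j=1..N. \<Sum>k=1..K. \<Sum>i<D l. (dd j k l i)^2) = (\<Sum>i<D l. \<Sum>j=1..N. \<Sum>k=1..K. (dd j k l i)^2)" .
  qed
  also have "\<dots> \<le> (\<Sum>l=1..N. \<Sum>i<D l. \<eta>^2 * real N * (\<Sum>k=1..K. (G k l i)^2))"
  proof (intro sum_mono)
    fix l i assume l: "l \<in> {1..N}"
    show "(\<Sum>j=1..N. \<Sum>k=1..K. (dd j k l i)^2) \<le> \<eta>^2 * real N * (\<Sum>k=1..K. (G k l i)^2)"
      using scalar_bound[OF assms(2) l, where x="\<lambda>k. G k l i" and e=\<eta>] unfolding dd_def Gb_def by blast
  qed
  also have "\<dots> \<le> (\<Sum>l=1..N. \<Sum>i<D l. \<eta>^2 * real N * (\<Sum>k=1..K. real Q * (\<Sum>\<tau>\<in>{t0..<t}. (g \<tau> k l (yv Q K th \<tau> k l) i)^2)))"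
  proof (intro sum_mono mult_left_mono)
    fix l i k
    have "(G k l i)^2 \<le> real (card {t0..<t}) * (\<Sum>\<tau>\<in>{t0..<t}. (g \<tau> k l (yv Q K th \<tau> k l) i)^2)"
      unfolding G_def by (rule cs_card) simp
    also have "\<dots> \<le> real Q * (\<Sum>\<tau>\<in>{t0..<t}. (g \<tau> k l (yv Q K th \<tau> k l) i)^2)"
      using t0lt by (intro mult_right_mono) (auto intro: sum_nonneg)
    finally show "(G k l i)^2 \<le> real Q * (\<Sum>\<tau>\<in>{t0..<t}. (g \<tau> k l (yv Q K th \<tau> k l) i)^2)" .
  qed auto
  also have "\<dots> = \<eta>^2 * real Q * real N * (\<Sum>j=1..N. \<Sum>\<tau>\<in>{t0..<t}. \<Sum>p=1..K.
              (bnorm (D j) (g \<tau> p j (yv Q K th \<tau> p j)))^2)"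
  proof -
    have "(\<Sum>j=1..N. \<Sum>\<tau>\<in>{t0..<t}. \<Sum>p=1..K. (bnorm (D j) (g \<tau> p j (yv Q K th \<tau> p j)))^2)
        = (\<Sum>j=1..N. \<Sum>\<tau>\<in>{t0..<t}. \<Sum>p=1..K. \<Sum>i<D j. (g \<tau> p j (yv Q K th \<tau> p j) i)^2)"
      by (simp add: bnorm_def sum_nonneg)
    also have "\<dots> = (\<Sum>j=1..N. \<Sum>i<D j. \<Sum>p=1..K. \<Sum>\<tau>\<in>{t0..<t}. (g \<tau> p j (yv Q K th \<tau> p j) i)^2)"
    proof (rule sum.cong[OF refl])
      fix j
      have "(\<Sum>\<tau>\<in>{t0..<t}. \<Sum>p=1..K. \<Sum>i<D j. (g \<tau> p j (yv Q K th \<tau> p j) i)^2)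
          = (\<Sum>p=1..K. \<Sum>\<tau>\<in>{t0..<t}. \<Sum>i<D j. (g \<tau> p j (yv Q K th \<tau> p j) i)^2)"
        by (rule sum.swap)
      also have "\<dots> = (\<Sum>p=1..K. \<Sum>i<D j. \<Sum>\<tau>\<in>{t0..<t}. (g \<tau> p j (yv Q K th \<tau> p j) i)^2)"
        by (rule sum.cong[OF refl], rule sum.swap)
      also have "\<dots> = (\<Sum>i<D j. \<Sum>p=1..K. \<Sum>\<tau>\<in>{t0..<t}. (g \<tau> p j (yv Q K th \<tau> p j) i)^2)"
        by (rule sum.swap)
      finally show "(\<Sum>\<tau>\<in>{t0..<t}. \<Sum>p=1..K. \<Sum>i<D j. (g \<tau> p j (yv Q K th \<tau> p j) i)^2)
          = (\<Sum>i<D j. \<Sum>p=1..K. \<Sum>\<tau>\<in>{t0..<t}. (g \<tau> p j (yv Q K th \<tau> p j) i)^2)" .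
    qed
    finally show ?thesis by (simp add: sum_distrib_left algebra_simps)
  qed
  finally have main: "(\<Sum>j=1..N. \<Sum>k=1..K. (vnorm D N (\<lambda>l i. avg K (th t) l i - yv Q K th t k j l i))^2)
      \<le> \<eta>^2 * real Q * real N * (\<Sum>j=1..N. \<Sum>\<tau>\<in>{t0..<t}. \<Sum>p=1..K.
              (bnorm (D j) (g \<tau> p j (yv Q K th \<tau> p j)))^2)" .
  have "Lmax^2 / real K \<ge> 0" by simp
  from mult_left_mono[OF main this] show ?thesis by (simp add: t0_def algebra_simps)
qed

end
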